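(* Let $m,n,k$ be positive integers with $(m,k-1)=1$ and $n=\mathrm{ind}_m(k)$, let $G=G(m,n,k)=\langle a,b;\ a^m=1,\ b^n=1,\ b^{-1}ab=a^k\rangle$, and let $x_1,x_2,y_1,y_2\in\mathbb{Z}_m$. Then $C(x_1,y_1)\cap C(x_2,y_2)\neq\varnothing$ if and only if $x_1\equiv x_2\pmod m$.
   Context: $\mathrm{ind}_m(k)$ is the least positive integer $d$ with $k^d\equiv1\pmod m$; $k_t=k^t-1\pmod m$. Elements of $G$ are written uniquely as $a^ib^j$, $i\in\mathbb{Z}_m$, $j\in\mathbb{Z}_n$. For $x,y\in\mathbb{Z}_m$, $\mu(x,y):G\to G$ is $(a^ib^j)\mu(x,y)=a^{xik^j-yk_j}$, and the container is $C(x,y)=\{\mu(x,yz): z\in\mathbb{Z}_m\}$. *)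

theory Defs
  imports "HOL-Number_Theory.Number_Theory"
begin

text \<open>Elements of G(m,n,k) are written uniquely as a^i b^j with i in Z_m, j in Z_n;
  we represent a^i b^j by the normal-form pair (i,j), 0 <= i < m, 0 <= j < n.\<close>

definition Gel :: "nat \<Rightarrow> nat \<Rightarrow> (nat \<times> nat) set" where
  "Gel m n = {0..<m} \<times> {0..<n}"

definition kt :: "nat \<Rightarrow> nat \<Rightarrow> nat \<Rightarrow> int" where
  "kt m k t = (int k ^ t - 1) mod int m"

definition mu :: "nat \<Rightarrow> nat \<Rightarrow> nat \<Rightarrow> int \<Rightarrow> int \<Rightarrow> (nat \<times> nat) \<Rightarrow> (nat \<times> nat)" where
  "mu m n k x y = restrict (\<lambda>(i, j). (nat ((x * int i * int k ^ j - y * kt m k j) mod int m), 0)) (Gel m n)"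

definition container :: "nat \<Rightarrow> nat \<Rightarrow> nat \<Rightarrow> int \<Rightarrow> int \<Rightarrow> ((nat \<times> nat) \<Rightarrow> (nat \<times> nat)) set" where
  "container m n k x y = {mu m n k x (y * z) | z. z \<in> {0..<int m}}"

end

theory Submission
  imports Defs
begin

theorem lemma3p4:
  fixes m n k :: nat and x1 x2 y1 y2 :: int
  assumes "m > 0" "n > 0" "k > 0"
    and "gcd (int m) (int k - 1) = 1"
    and "n = ord m k"
    and "x1 \<in> {0..<int m}" "x2 \<in> {0..<int m}" "y1 \<in> {0..<int m}" "y2 \<in> {0..<int m}"
  shows "container m n k x1 y1 \<inter> container m n k x2 y2 \<noteq> {} \<longleftrightarrow> [x1 = x2] (mod int m)"
proof
  assume "container m n k x1 y1 \<inter> container m n k x2 y2 \<noteq> {}"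
  then obtain z1 z2 where eq: "mu m n k x1 (y1 * z1) = mu m n k x2 (y2 * z2)"
    unfolding container_def by blast
  show "[x1 = x2] (mod int m)"
  proof (cases "m = 1")
    case True then show ?thesis by (simp add: cong_def)
  next
    case False
    then have g: "(1, 0) \<in> Gel m n" using assms(1,2) by (simp add: Gel_def)
    have k0: "kt m k 0 = 0" by (simp add: kt_def)
    have "mu m n k x1 (y1 * z1) (1,0) = mu m n k x2 (y2 * z2) (1,0)" using eq by simp
    then have "nat (x1 mod int m) = nat (x2 mod int m)"
      using g k0 by (simp add: mu_def)
    then have "x1 mod int m = x2 mod int m"
      using assms(1) by (simp add: nat_eq_iff)
    then show ?thesis by (simp add: cong_def)
  qed
next
  assume "[x1 = x2] (mod int m)"
  then have "x1 = x2" using assms(6,7) by (simp add: cong_def)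
  then have "mu m n k x1 (y1 * 0) \<in> container m n k x1 y1 \<inter> container m n k x2 y2"
    unfolding container_def using assms(1)
    by auto (rule exI[of _ 0], simp)+
  then show "container m n k x1 y1 \<inter> container m n k x2 y2 \<noteq> {}" by blast
qed

end
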